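(* Let $m\ge2$. There is a constant $C_m>0$ depending only on $m$ such that for every integer $N\ge2$ coprime to $m$, $$\tfrac13\operatorname{ord}_m(N)\le \operatorname{diam}\mathrm{Cay}\big(G_m/G_m(N),\{A,T\}\big)\le C_m\operatorname{ord}_m(N).$$ (One may take $C_m=2m(2+\log m)$.)
   Context: $G_m$ is the subgroup of $GL_2(\mathbb Z[1/m])$ of matrices $\begin{pmatrix} m^k & r\\ 0&1\end{pmatrix}$, $k\in\mathbb Z$, $r\in\mathbb Z[1/m]$, generated by $A=\begin{pmatrix}1&1\\0&1\end{pmatrix}$ and $T=\begin{pmatrix}m&0\\0&1\end{pmatrix}$. For $N$ coprime to $m$, $G_m(N)$ is the kernel of reduction modulo $N$, $G_m\to GL_2(\mathbb Z/N\mathbb Z)$, and $\operatorname{ord}_m(N)$ is the multiplicative order of $m$ modulo $N$. The Cayley graph is taken with respect to the images of $A^{\pm1},T^{\pm1}$. *)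

theory Defs
  imports "HOL-Analysis.Finite_Cartesian_Product" "HOL-Analysis.Cartesian_Space"
    "HOL-Algebra.Coset" "HOL-Number_Theory.Pocklington"
begin

text \<open>2x2 rational matrices; the generators A, T of G_m and their inverses.\<close>

definition mat2 :: "rat \<Rightarrow> rat \<Rightarrow> rat \<Rightarrow> rat \<Rightarrow> rat^2^2" where
  "mat2 a b c d = vector [vector [a, b], vector [c, d]]"

definition Amat :: "rat^2^2" where "Amat = mat2 1 1 0 1"
definition Ainv :: "rat^2^2" where "Ainv = mat2 1 (-1) 0 1"
definition Tmat :: "nat \<Rightarrow> rat^2^2" where "Tmat m = mat2 (of_nat m) 0 0 1"
definition Tinv :: "nat \<Rightarrow> rat^2^2" where "Tinv m = mat2 (1 / of_nat m) 0 0 1"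

definition gens :: "nat \<Rightarrow> (rat^2^2) set" where
  "gens m = {Amat, Ainv, Tmat m, Tinv m}"

text \<open>G_m: the subgroup of GL_2(Q) generated by A and T (all finite products of
  A^{+-1}, T^{+-1}).\<close>
definition Gm_carrier :: "nat \<Rightarrow> (rat^2^2) set" where
  "Gm_carrier m = {foldr (**) ws (mat 1) | ws. set ws \<subseteq> gens m}"

definition Gm :: "nat \<Rightarrow> (rat^2^2) monoid" where
  "Gm m = \<lparr>carrier = Gm_carrier m, monoid.mult = (**), one = mat 1\<rparr>"

text \<open>Congruence modulo N in Z[1/m]: q - c lies in N * Z[1/m].  For N coprime to m,
  Z[1/m]/N Z[1/m] = Z/NZ, so this is equality after reduction modulo N.\<close>
definition congN :: "nat \<Rightarrow> nat \<Rightarrow> rat \<Rightarrow> rat \<Rightarrow> bool" where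
  "congN m N q c \<longleftrightarrow> (\<exists>(a::int) (j::nat). q - c = of_nat N * of_int a / of_nat m ^ j)"

text \<open>G_m(N): kernel of reduction modulo N, G_m -> GL_2(Z/NZ).\<close>
definition GmN :: "nat \<Rightarrow> nat \<Rightarrow> (rat^2^2) set" where
  "GmN m N = {g \<in> Gm_carrier m. \<forall>i j. congN m N (g $ i $ j) (mat 1 $ i $ j)}"

text \<open>Word metric of the Cayley graph of a group G with respect to a generating set S
  (edges x -- x s, s in S; S is symmetric below), and its diameter.\<close>
definition cay_dist :: "('a, 'b) monoid_scheme \<Rightarrow> 'a set \<Rightarrow> 'a \<Rightarrow> 'a \<Rightarrow> nat" where
  "cay_dist G S x y = (LEAST n. \<exists>ws. length ws = n \<and> set ws \<subseteq> S \<and>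
       x \<otimes>\<^bsub>G\<^esub> foldr (\<lambda>s acc. s \<otimes>\<^bsub>G\<^esub> acc) ws \<one>\<^bsub>G\<^esub> = y)"

definition cay_diam :: "('a, 'b) monoid_scheme \<Rightarrow> 'a set \<Rightarrow> nat" where
  "cay_diam G S = Sup {cay_dist G S x y | x y. x \<in> carrier G \<and> y \<in> carrier G}"

text \<open>The quotient G_m/G_m(N) with the images of A^{+-1}, T^{+-1} as generators.\<close>
definition Qgrp :: "nat \<Rightarrow> nat \<Rightarrow> (rat^2^2) set monoid" where
  "Qgrp m N = Gm m Mod GmN m N"

definition Qgens :: "nat \<Rightarrow> nat \<Rightarrow> (rat^2^2) set set" where
  "Qgens m N = {GmN m N #>\<^bsub>Gm m\<^esub> g | g. g \<in> gens m}"

end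

theory Submission
  imports Defs
begin

lemma mat2_nth: "mat2 a b c d $ 1 $ 1 = a" "mat2 a b c d $ 1 $ 2 = b"
  "mat2 a b c d $ 2 $ 1 = c" "mat2 a b c d $ 2 $ 2 = d"
  by (simp_all add: mat2_def)

lemma mat2_eq: "mat2 a b c d = mat2 a' b' c' d' \<longleftrightarrow> a = a' \<and> b = b' \<and> c = c' \<and> d = d'"
  by (auto simp: mat2_def vec_eq_iff forall_2)

lemma mat2_mult: "mat2 a b c d ** mat2 a' b' c' d' =
   mat2 (a*a'+b*c') (a*b'+b*d') (c*a'+d*c') (c*b'+d*d')"
  by (simp add: mat2_def vec_eq_iff forall_2 matrix_matrix_mult_def sum_2)

lemma mat1_eq: "(mat 1 :: rat^2^2) = mat2 1 0 0 1"
  by (simp add: mat2_def vec_eq_iff forall_2 mat_def)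

lemma foldr_append_mat: "foldr (**) (xs @ ys) (mat 1) = foldr (**) xs (mat 1) ** foldr (**) ys (mat 1)"
  for xs ys :: "(rat^2^2) list"
  by (induction xs) (auto simp: matrix_mul_assoc)

lemma gens_mat2: "Amat = mat2 1 1 0 1" "Ainv = mat2 1 (-1) 0 1" "Tmat m = mat2 (of_nat m) 0 0 1"
  "Tinv m = mat2 (1 / of_nat m) 0 0 1"
  by (simp_all add: Amat_def Ainv_def Tmat_def Tinv_def)

lemma gens_inv: "m > 0 \<Longrightarrow> g \<in> gens m \<Longrightarrow> \<exists>g' \<in> gens m. g' ** g = mat 1"
proof -
  assume m: "m > 0" and g: "g \<in> gens m"
  then consider "g = Amat" | "g = Ainv" | "g = Tmat m" | "g = Tinv m" by (auto simp: gens_def)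
  then show ?thesis
  proof cases
    case 1 then show ?thesis by (intro bexI[of _ Ainv]) (auto simp: gens_def gens_mat2 mat2_mult mat1_eq)
  next
    case 2 then show ?thesis by (intro bexI[of _ Amat]) (auto simp: gens_def gens_mat2 mat2_mult mat1_eq)
  next
    case 3 then show ?thesis using m by (intro bexI[of _ "Tinv m"]) (auto simp: gens_def gens_mat2 mat2_mult mat1_eq)
  next
    case 4 then show ?thesis using m by (intro bexI[of _ "Tmat m"]) (auto simp: gens_def gens_mat2 mat2_mult mat1_eq)
  qed
qed

lemma Gm_group: assumes "m > 0" shows "group (Gm m)"
proof (rule groupI)
  fix x y assume "x \<in> carrier (Gm m)" "y \<in> carrier (Gm m)"
  then obtain xs ys where "x = foldr (**) xs (mat 1)" "set xs \<subseteq> gens m"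
     "y = foldr (**) ys (mat 1)" "set ys \<subseteq> gens m"
    by (auto simp: Gm_def Gm_carrier_def)
  then show "x \<otimes>\<^bsub>Gm m\<^esub> y \<in> carrier (Gm m)"
    by (auto simp: Gm_def Gm_carrier_def foldr_append_mat[symmetric] intro!: exI[of _ "xs @ ys"])
next
  show "\<one>\<^bsub>Gm m\<^esub> \<in> carrier (Gm m)"
    by (auto simp: Gm_def Gm_carrier_def intro!: exI[of _ "[]"])
next
  fix x y z show "x \<otimes>\<^bsub>Gm m\<^esub> y \<otimes>\<^bsub>Gm m\<^esub> z = x \<otimes>\<^bsub>Gm m\<^esub> (y \<otimes>\<^bsub>Gm m\<^esub> z)"
    by (simp add: Gm_def matrix_mul_assoc)
next
  fix x show "\<one>\<^bsub>Gm m\<^esub> \<otimes>\<^bsub>Gm m\<^esub> x = x" by (simp add: Gm_def)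
next
  fix x assume "x \<in> carrier (Gm m)"
  then obtain xs where x: "x = foldr (**) xs (mat 1)" "set xs \<subseteq> gens m"
    by (auto simp: Gm_def Gm_carrier_def)
  have "\<exists>ys. set ys \<subseteq> gens m \<and> foldr (**) ys (mat 1) ** foldr (**) xs (mat 1) = mat 1"
    using x(2)
  proof (induction xs)
    case Nil then show ?case by (auto intro!: exI[of _ "[]"])
  next
    case (Cons g xs)
    then obtain ys where ys: "set ys \<subseteq> gens m" "foldr (**) ys (mat 1) ** foldr (**) xs (mat 1) = mat 1"
      by auto
    obtain g' where g': "g' \<in> gens m" "g' ** g = mat 1" using gens_inv[OF assms, of g] Cons.prems by auto
    have "foldr (**) (ys @ [g']) (mat 1) ** foldr (**) (g # xs) (mat 1)
        = foldr (**) ys (mat 1) ** ((g' ** g) ** foldr (**) xs (mat 1))"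
      by (simp only: foldr_append_mat) (simp add: matrix_mul_assoc)
    also have "\<dots> = mat 1" using ys g' by simp
    finally show ?case using ys g' by (intro exI[of _ "ys @ [g']"]) auto
  qed
  then show "\<exists>y\<in>carrier (Gm m). y \<otimes>\<^bsub>Gm m\<^esub> x = \<one>\<^bsub>Gm m\<^esub>"
    using x by (auto simp: Gm_def Gm_carrier_def)
qed

definition inZ :: "nat \<Rightarrow> rat \<Rightarrow> bool" where
  "inZ m b \<longleftrightarrow> (\<exists>(c::int) (l::nat). b = of_int c / of_nat m ^ l)"

lemma word_rep:
  assumes "m > 0" "set ws \<subseteq> gens m"
  shows "\<exists>i j b. foldr (**) ws (mat 1) = mat2 (of_nat m ^ i / of_nat m ^ j) b 0 1 \<and> inZ m b
     \<and> i + j \<le> length ws"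
  using assms(2)
proof (induction ws)
  case Nil then show ?case
    by (auto simp: mat1_eq inZ_def intro!: exI[of _ 0])
next
  case (Cons g ws)
  then obtain i j b c l where r: "foldr (**) ws (mat 1) = mat2 (of_nat m ^ i / of_nat m ^ j) b 0 1"
    "b = of_int c / of_nat m ^ l" "i + j \<le> length ws"
    by (auto simp: inZ_def)
  have mp: "(of_nat m :: rat) ^ l > 0" using assms by simp
  have "g \<in> gens m" using Cons.prems by auto
  then consider "g = Amat" | "g = Ainv" | "g = Tmat m" | "g = Tinv m" by (auto simp: gens_def)
  then show ?case
  proof cases
    case 1
    have "b + 1 = of_int (c + int m ^ l) / of_nat m ^ l" using r(2) mp by (simp add: field_simps)
    then have z: "inZ m (b + 1)" unfolding inZ_def by blast
    have "foldr (**) (g#ws) (mat 1) = mat2 (of_nat m ^ i / of_nat m ^ j) (b + 1) 0 1"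
      by (simp add: 1 r(1) gens_mat2 mat2_mult)
    then show ?thesis using z r(3) by (intro exI[of _ i] exI[of _ j] exI[of _ "b+1"]) auto
  next
    case 2
    have "b - 1 = of_int (c - int m ^ l) / of_nat m ^ l" using r(2) mp by (simp add: field_simps)
    then have z: "inZ m (b - 1)" unfolding inZ_def by blast
    have "foldr (**) (g#ws) (mat 1) = mat2 (of_nat m ^ i / of_nat m ^ j) (b - 1) 0 1"
      by (simp add: 2 r(1) gens_mat2 mat2_mult)
    then show ?thesis using z r(3) by (intro exI[of _ i] exI[of _ j] exI[of _ "b-1"]) auto
  next
    case 3
    have "of_nat m * b = of_int (int m * c) / of_nat m ^ l" using r(2) mp by (simp add: field_simps)
    then have z: "inZ m (of_nat m * b)" unfolding inZ_def by blast
    have "foldr (**) (g#ws) (mat 1) = mat2 (of_nat m ^ Suc i / of_nat m ^ j) (of_nat m * b) 0 1"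
      by (simp add: 3 r(1) gens_mat2 mat2_mult)
    then show ?thesis using z r(3) by (intro exI[of _ "Suc i"] exI[of _ j] exI[of _ "of_nat m * b"]) auto
  next
    case 4
    have "b / of_nat m = of_int c / of_nat m ^ Suc l" using r(2) by (simp add: divide_divide_eq_left mult.commute)
    then have z: "inZ m (b / of_nat m)" unfolding inZ_def by blast
    have "foldr (**) (g#ws) (mat 1) = mat2 (of_nat m ^ i / of_nat m ^ Suc j) (b / of_nat m) 0 1"
      by (simp add: 4 r(1) gens_mat2 mat2_mult)
    then show ?thesis using z r(3) by (intro exI[of _ i] exI[of _ "Suc j"] exI[of _ "b / of_nat m"]) auto
  qed
qed

lemma carrier_rep:
  assumes "m > 0" "g \<in> Gm_carrier m"
  shows "\<exists>i j b. g = mat2 (of_nat m ^ i / of_nat m ^ j) b 0 1 \<and> inZ m b"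
proof -
  obtain ws where "g = foldr (**) ws (mat 1)" "set ws \<subseteq> gens m" using assms(2) by (auto simp: Gm_carrier_def)
  then show ?thesis using word_rep[OF assms(1)] by blast
qed

lemma carrier_Gm: "carrier (Gm m) = Gm_carrier m" by (simp add: Gm_def)
lemma mult_Gm: "x \<otimes>\<^bsub>Gm m\<^esub> y = x ** y" by (simp add: Gm_def)
lemma one_Gm: "\<one>\<^bsub>Gm m\<^esub> = mat 1" by (simp add: Gm_def)

lemma inZ_pow: "m > 0 \<Longrightarrow> inZ m (of_nat m ^ i / of_nat m ^ j)"
  unfolding inZ_def by (rule exI[of _ "int m ^ i"], rule exI[of _ j]) simp

lemma inZ_mult: assumes "inZ m x" "inZ m y" shows "inZ m (x * y)"
proof -
  obtain a k b l where "x = of_int a / of_nat m ^ k" "y = of_int b / of_nat m ^ l"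
    using assms by (auto simp: inZ_def)
  then have "x * y = of_int (a * b) / of_nat m ^ (k + l)" by (simp add: power_add)
  then show ?thesis unfolding inZ_def by blast
qed

lemma inZ_uminus: assumes "inZ m x" shows "inZ m (- x)"
proof -
  obtain a k where "x = of_int a / of_nat m ^ k" using assms by (auto simp: inZ_def)
  then have "- x = of_int (- a) / of_nat m ^ k" by simp
  then show ?thesis unfolding inZ_def by blast
qed

lemma congN_0_add:
  assumes "m > 0" "congN m N x 0" "congN m N y 0" shows "congN m N (x + y) 0"
proof -
  obtain a k b l where xy: "x = of_nat N * of_int a / of_nat m ^ k" "y = of_nat N * of_int b / of_nat m ^ l"
    using assms by (auto simp: congN_def)
  have mp: "(of_nat m :: rat) ^ k > 0" "(of_nat m :: rat) ^ l > 0" using assms by auto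
  have "x + y = of_nat N * of_int (a * int m ^ l + b * int m ^ k) / of_nat m ^ (k + l)"
    unfolding xy using mp by (simp add: add_frac_eq power_add algebra_simps)
  then show ?thesis unfolding congN_def by (metis diff_zero)
qed

lemma congN_0_mult:
  assumes "inZ m q" "congN m N x 0" shows "congN m N (q * x) 0"
proof -
  obtain a k b l where "x = of_nat N * of_int a / of_nat m ^ k" "q = of_int b / of_nat m ^ l"
    using assms by (auto simp: congN_def inZ_def)
  then have "q * x = of_nat N * of_int (b * a) / of_nat m ^ (l + k)" by (simp add: power_add)
  then show ?thesis unfolding congN_def by (metis diff_zero)
qed

lemma congN_0_uminus:
  assumes "congN m N x 0" shows "congN m N (- x) 0"
proof -
  obtain a k where "x = of_nat N * of_int a / of_nat m ^ k"
    using assms by (auto simp: congN_def)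
  then have "- x = of_nat N * of_int (- a) / of_nat m ^ k" by simp
  then show ?thesis unfolding congN_def by (metis diff_zero)
qed

lemma congN_0: "congN m N 0 0" unfolding congN_def by (rule exI[of _ 0]) simp

lemma GmN_mat2: "mat2 u b 0 1 \<in> GmN m N \<longleftrightarrow>
   mat2 u b 0 1 \<in> Gm_carrier m \<and> congN m N (u - 1) 0 \<and> congN m N b 0"
proof -
  have e: "congN m N q c \<longleftrightarrow> congN m N (q - c) 0" for q c by (simp add: congN_def)
  have c: "congN m N x x" for x unfolding congN_def by (rule exI[of _ 0]) simp
  have "(\<forall>i j. congN m N (mat2 u b 0 1 $ i $ j) (mat 1 $ i $ j)) \<longleftrightarrow>
     congN m N u 1 \<and> congN m N b 0 \<and> congN m N 0 0 \<and> congN m N 1 1"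
    by (simp only: forall_2 mat1_eq mat2_nth conj_assoc)
  then show ?thesis unfolding GmN_def mem_Collect_eq e[of u 1] using c[of 0] c[of 1] by blast
qed

lemma inv_mat2:
  assumes "m > 0" "x \<in> Gm_carrier m" "x = mat2 u b 0 1"
  shows "inv\<^bsub>Gm m\<^esub> x = mat2 (1/u) (-b/u) 0 1 \<and> u \<noteq> 0"
proof -
  interpret G: group "Gm m" by (rule Gm_group[OF assms(1)])
  have ix: "inv\<^bsub>Gm m\<^esub> x \<in> Gm_carrier m" using assms G.inv_closed by (simp add: carrier_Gm)
  then obtain u' b' where y: "inv\<^bsub>Gm m\<^esub> x = mat2 u' b' 0 1"
    using carrier_rep[OF assms(1)] by blast
  have "inv\<^bsub>Gm m\<^esub> x ** x = mat 1" using G.l_inv[of x] assms by (simp add: carrier_Gm mult_Gm one_Gm)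
  then have "u' * u = 1" "u' * b + b' = 0" using y assms(3) by (simp_all add: mat2_mult mat1_eq mat2_eq)
  then have h: "u' * u = 1" "u' * b + b' = 0" by simp_all
  then have nz: "u \<noteq> 0" by auto
  have u': "u' = 1/u" using h(1) nz by (simp add: eq_divide_eq)
  have "b' = - (u' * b)" using h(2) by linarith
  then have "b' = -b/u" using u' by simp
  then show ?thesis using y u' nz by simp
qed

lemma GmN_sub: "GmN m N \<subseteq> Gm_carrier m" by (auto simp: GmN_def)

lemma GmN_elem:
  assumes "m > 0" "h \<in> GmN m N"
  shows "\<exists>i j b. h = mat2 (of_nat m ^ i / of_nat m ^ j) b 0 1 \<and> inZ m b \<and>
     congN m N (of_nat m ^ i / of_nat m ^ j - 1) 0 \<and> congN m N b 0"
proof -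
  obtain i j b where h: "h = mat2 (of_nat m ^ i / of_nat m ^ j) b 0 1" "inZ m b"
    using carrier_rep[OF assms(1)] assms(2) GmN_sub by blast
  then show ?thesis using assms(2) GmN_mat2 by blast
qed

lemma GmN_subgroup: assumes "m > 0" shows "subgroup (GmN m N) (Gm m)"
proof -
  interpret G: group "Gm m" by (rule Gm_group[OF assms(1)])
  have mp: "(of_nat m :: rat) ^ k > 0" for k using assms by simp
  show ?thesis
  proof (rule G.subgroupI)
    show "GmN m N \<subseteq> carrier (Gm m)" using GmN_sub by (simp add: carrier_Gm)
  next
    have "mat 1 \<in> GmN m N"
      using G.one_closed by (simp add: mat1_eq GmN_mat2 carrier_Gm one_Gm congN_0)
    then show "GmN m N \<noteq> {}" by blast
  next
    fix a assume a: "a \<in> GmN m N"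
    then obtain i j b where h: "a = mat2 (of_nat m ^ i / of_nat m ^ j) b 0 1" "inZ m b"
      "congN m N (of_nat m ^ i / of_nat m ^ j - 1) 0" "congN m N b 0"
      using GmN_elem[OF assms] by blast
    let ?u = "(of_nat m ^ i / of_nat m ^ j :: rat)"
    have ac: "a \<in> Gm_carrier m" using a GmN_sub by blast
    have ia: "inv\<^bsub>Gm m\<^esub> a = mat2 (1/?u) (-b/?u) 0 1" using inv_mat2[OF assms ac h(1)] by blast
    have iac: "inv\<^bsub>Gm m\<^esub> a \<in> Gm_carrier m" using G.inv_closed ac by (simp add: carrier_Gm)
    have e1: "1/?u - 1 = (of_nat m ^ j / of_nat m ^ i) * (- (?u - 1))" using mp[of i] mp[of j]
      by (simp add: field_simps)
    have e2: "-b/?u = (of_nat m ^ j / of_nat m ^ i) * (- b)" by simp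
    have "congN m N (1/?u - 1) 0" unfolding e1 by (rule congN_0_mult[OF inZ_pow[OF assms] congN_0_uminus[OF h(3)]])
    moreover have "congN m N (-b/?u) 0" unfolding e2 by (rule congN_0_mult[OF inZ_pow[OF assms] congN_0_uminus[OF h(4)]])
    ultimately show "inv\<^bsub>Gm m\<^esub> a \<in> GmN m N" using iac ia by (simp add: GmN_mat2)
  next
    fix a a' assume a: "a \<in> GmN m N" and a': "a' \<in> GmN m N"
    then obtain i j b where h: "a = mat2 (of_nat m ^ i / of_nat m ^ j) b 0 1" "inZ m b"
      "congN m N (of_nat m ^ i / of_nat m ^ j - 1) 0" "congN m N b 0"
      using GmN_elem[OF assms] by blast
    obtain i' j' b' where h': "a' = mat2 (of_nat m ^ i' / of_nat m ^ j') b' 0 1" "inZ m b'"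
      "congN m N (of_nat m ^ i' / of_nat m ^ j' - 1) 0" "congN m N b' 0"
      using GmN_elem[OF assms] a' by blast
    let ?u = "(of_nat m ^ i / of_nat m ^ j :: rat)"
    let ?v = "(of_nat m ^ i' / of_nat m ^ j' :: rat)"
    have "a \<in> Gm_carrier m" "a' \<in> Gm_carrier m" using a a' GmN_sub by blast+
    then have pc: "a ** a' \<in> Gm_carrier m" using G.m_closed[of a a'] by (simp add: carrier_Gm mult_Gm)
    have p: "a ** a' = mat2 (?u * ?v) (?u * b' + b) 0 1" using h(1) h'(1) by (simp add: mat2_mult)
    have e1: "?u * ?v - 1 = ?v * (?u - 1) + (?v - 1)" by (simp add: algebra_simps)
    have "congN m N (?u * ?v - 1) 0" unfolding e1
      by (rule congN_0_add[OF assms congN_0_mult[OF inZ_pow[OF assms] h(3)] h'(3)])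
    moreover have "congN m N (?u * b' + b) 0"
      by (rule congN_0_add[OF assms congN_0_mult[OF inZ_pow[OF assms] h'(4)] h(4)])
    ultimately show "a \<otimes>\<^bsub>Gm m\<^esub> a' \<in> GmN m N" using pc p by (simp add: GmN_mat2 mult_Gm)
  qed
qed

lemma GmN_normal: assumes "m > 0" shows "GmN m N \<lhd> Gm m"
proof -
  interpret G: group "Gm m" by (rule Gm_group[OF assms(1)])
  have mp: "(of_nat m :: rat) ^ k > 0" for k using assms by simp
  show ?thesis
  proof (rule G.normal_invI[OF GmN_subgroup[OF assms]])
    fix x h assume x: "x \<in> carrier (Gm m)" and hH: "h \<in> GmN m N"
    have "x \<in> Gm_carrier m" using x by (simp add: carrier_Gm)
    then obtain i j b where xr: "x = mat2 (of_nat m ^ i / of_nat m ^ j) b 0 1" "inZ m b"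
      using carrier_rep[OF assms(1)] by blast
    obtain i' j' d where h: "h = mat2 (of_nat m ^ i' / of_nat m ^ j') d 0 1" "inZ m d"
      "congN m N (of_nat m ^ i' / of_nat m ^ j' - 1) 0" "congN m N d 0"
      using GmN_elem[OF assms hH] by blast
    let ?u = "(of_nat m ^ i / of_nat m ^ j :: rat)"
    let ?v = "(of_nat m ^ i' / of_nat m ^ j' :: rat)"
    have ix: "inv\<^bsub>Gm m\<^esub> x = mat2 (1/?u) (-b/?u) 0 1" using inv_mat2[OF assms _ xr(1)] x
      by (simp add: carrier_Gm)
    have hc: "h \<in> carrier (Gm m)" using hH GmN_sub by (auto simp: carrier_Gm)
    have pc: "x \<otimes>\<^bsub>Gm m\<^esub> h \<otimes>\<^bsub>Gm m\<^esub> inv\<^bsub>Gm m\<^esub> x \<in> Gm_carrier m"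
      using x hc by (simp add: carrier_Gm[symmetric])
    have up: "?u \<noteq> 0" using mp[of i] mp[of j] by simp
    have p: "x \<otimes>\<^bsub>Gm m\<^esub> h \<otimes>\<^bsub>Gm m\<^esub> inv\<^bsub>Gm m\<^esub> x = mat2 ?v (?u * d + (-b) * (?v - 1)) 0 1"
      unfolding mult_Gm ix unfolding xr(1) h(1) mat2_mult mat2_eq using up assms
      by (simp add: field_simps)
    have "congN m N (?u * d + (-b) * (?v - 1)) 0"
      by (rule congN_0_add[OF assms congN_0_mult[OF inZ_pow[OF assms] h(4)]
            congN_0_mult[OF inZ_uminus[OF xr(2)] h(3)]])
    then show "x \<otimes>\<^bsub>Gm m\<^esub> h \<otimes>\<^bsub>Gm m\<^esub> inv\<^bsub>Gm m\<^esub> x \<in> GmN m N"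
      using pc p h(3) by (simp add: GmN_mat2)
  qed
qed

lemma word_carrier: "set gs \<subseteq> gens m \<Longrightarrow> foldr (**) gs (mat 1) \<in> Gm_carrier m"
  by (auto simp: Gm_carrier_def)

lemma gens_carrier: "g \<in> gens m \<Longrightarrow> g \<in> Gm_carrier m"
  using word_carrier[of "[g]" m] by simp

lemma Qword_map:
  assumes "m > 0" "set gs \<subseteq> gens m"
  shows "foldr (\<lambda>s acc. s \<otimes>\<^bsub>Qgrp m N\<^esub> acc) (map (\<lambda>g. GmN m N #>\<^bsub>Gm m\<^esub> g) gs) \<one>\<^bsub>Qgrp m N\<^esub>
     = GmN m N #>\<^bsub>Gm m\<^esub> foldr (**) gs (mat 1)"
  using assms(2)
proof (induction gs)
  case Nil
  interpret G: group "Gm m" by (rule Gm_group[OF assms(1)])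
  have "GmN m N #>\<^bsub>Gm m\<^esub> \<one>\<^bsub>Gm m\<^esub> = GmN m N"
    by (rule G.coset_mult_one) (simp add: GmN_sub carrier_Gm)
  then show ?case by (simp add: Qgrp_def one_Gm)
next
  case (Cons g gs)
  interpret N: normal "GmN m N" "Gm m" by (rule GmN_normal[OF assms(1)])
  have gc: "g \<in> carrier (Gm m)" using Cons.prems gens_carrier by (auto simp: carrier_Gm)
  have wc: "foldr (**) gs (mat 1) \<in> carrier (Gm m)" using Cons.prems word_carrier by (auto simp: carrier_Gm)
  show ?case using Cons N.rcos_sum[OF gc wc] by (simp add: Qgrp_def mult_Gm)
qed

lemma Qword_ex:
  assumes "set ws \<subseteq> Qgens m N"
  shows "\<exists>gs. set gs \<subseteq> gens m \<and> ws = map (\<lambda>g. GmN m N #>\<^bsub>Gm m\<^esub> g) gs"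
  using assms
proof (induction ws)
  case Nil then show ?case by simp
next
  case (Cons w ws)
  then obtain gs where "set gs \<subseteq> gens m" "ws = map (\<lambda>g. GmN m N #>\<^bsub>Gm m\<^esub> g) gs" by auto
  moreover obtain g where "g \<in> gens m" "w = GmN m N #>\<^bsub>Gm m\<^esub> g" using Cons.prems by (auto simp: Qgens_def)
  ultimately show ?case by (intro exI[of _ "g # gs"]) auto
qed

lemma carrier_Q: "carrier (Qgrp m N) = (\<lambda>g. GmN m N #>\<^bsub>Gm m\<^esub> g) ` Gm_carrier m"
  by (simp add: Qgrp_def carrier_FactGroup carrier_Gm)

lemma Qgens_map: "set gs \<subseteq> gens m \<Longrightarrow> set (map (\<lambda>g. GmN m N #>\<^bsub>Gm m\<^esub> g) gs) \<subseteq> Qgens m N"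
  by (auto simp: Qgens_def)

lemma dist_word_iff:
  assumes "m > 0" "g1 \<in> Gm_carrier m"
  shows "(\<exists>ws. length ws = n \<and> set ws \<subseteq> Qgens m N \<and>
       (GmN m N #>\<^bsub>Gm m\<^esub> g1) \<otimes>\<^bsub>Qgrp m N\<^esub> foldr (\<lambda>s acc. s \<otimes>\<^bsub>Qgrp m N\<^esub> acc) ws \<one>\<^bsub>Qgrp m N\<^esub> = y)
     \<longleftrightarrow> (\<exists>gs. length gs = n \<and> set gs \<subseteq> gens m \<and> GmN m N #>\<^bsub>Gm m\<^esub> (g1 ** foldr (**) gs (mat 1)) = y)"
proof -
  interpret N: normal "GmN m N" "Gm m" by (rule GmN_normal[OF assms(1)])
  have key: "(GmN m N #>\<^bsub>Gm m\<^esub> g1) \<otimes>\<^bsub>Qgrp m N\<^esub> foldr (\<lambda>s acc. s \<otimes>\<^bsub>Qgrp m N\<^esub> acc) (map (\<lambda>g. GmN m N #>\<^bsub>Gm m\<^esub> g) gs) \<one>\<^bsub>Qgrp m N\<^esub>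
     = GmN m N #>\<^bsub>Gm m\<^esub> (g1 ** foldr (**) gs (mat 1))" if "set gs \<subseteq> gens m" for gs
  proof -
    have wc: "foldr (**) gs (mat 1) \<in> carrier (Gm m)" using that word_carrier by (auto simp: carrier_Gm)
    have gc: "g1 \<in> carrier (Gm m)" using assms by (simp add: carrier_Gm)
    show ?thesis unfolding Qword_map[OF assms(1) that]
      using N.rcos_sum[OF gc wc] by (simp add: Qgrp_def mult_Gm)
  qed
  show ?thesis
  proof
    assume "\<exists>ws. length ws = n \<and> set ws \<subseteq> Qgens m N \<and>
       (GmN m N #>\<^bsub>Gm m\<^esub> g1) \<otimes>\<^bsub>Qgrp m N\<^esub> foldr (\<lambda>s acc. s \<otimes>\<^bsub>Qgrp m N\<^esub> acc) ws \<one>\<^bsub>Qgrp m N\<^esub> = y"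
    then obtain ws where ws: "length ws = n" "set ws \<subseteq> Qgens m N"
      "(GmN m N #>\<^bsub>Gm m\<^esub> g1) \<otimes>\<^bsub>Qgrp m N\<^esub> foldr (\<lambda>s acc. s \<otimes>\<^bsub>Qgrp m N\<^esub> acc) ws \<one>\<^bsub>Qgrp m N\<^esub> = y"
      by blast
    obtain gs where gs: "set gs \<subseteq> gens m" "ws = map (\<lambda>g. GmN m N #>\<^bsub>Gm m\<^esub> g) gs"
      using Qword_ex[OF ws(2)] by blast
    show "\<exists>gs. length gs = n \<and> set gs \<subseteq> gens m \<and> GmN m N #>\<^bsub>Gm m\<^esub> (g1 ** foldr (**) gs (mat 1)) = y"
      using ws gs key[OF gs(1)] by (intro exI[of _ gs]) auto
  next
    assume "\<exists>gs. length gs = n \<and> set gs \<subseteq> gens m \<and> GmN m N #>\<^bsub>Gm m\<^esub> (g1 ** foldr (**) gs (mat 1)) = y"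
    then obtain gs where gs: "length gs = n" "set gs \<subseteq> gens m" "GmN m N #>\<^bsub>Gm m\<^esub> (g1 ** foldr (**) gs (mat 1)) = y"
      by blast
    show "\<exists>ws. length ws = n \<and> set ws \<subseteq> Qgens m N \<and>
       (GmN m N #>\<^bsub>Gm m\<^esub> g1) \<otimes>\<^bsub>Qgrp m N\<^esub> foldr (\<lambda>s acc. s \<otimes>\<^bsub>Qgrp m N\<^esub> acc) ws \<one>\<^bsub>Qgrp m N\<^esub> = y"
      using gs key[OF gs(2)] Qgens_map[OF gs(2), of N]
      by (intro exI[of _ "map (\<lambda>g. GmN m N #>\<^bsub>Gm m\<^esub> g) gs"]) auto
  qed
qed

lemma cay_dist_eq:
  assumes "m > 0" "g1 \<in> Gm_carrier m"
  shows "cay_dist (Qgrp m N) (Qgens m N) (GmN m N #>\<^bsub>Gm m\<^esub> g1) y =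
    (LEAST n. \<exists>gs. length gs = n \<and> set gs \<subseteq> gens m \<and> GmN m N #>\<^bsub>Gm m\<^esub> (g1 ** foldr (**) gs (mat 1)) = y)"
  unfolding cay_dist_def using dist_word_iff[OF assms] by simp

lemma Apow: "foldr (**) (replicate k Amat) (mat 1) = mat2 1 (of_nat k) 0 1"
  by (induction k) (simp_all add: mat1_eq gens_mat2 mat2_mult add.commute del: foldr_replicate)

lemma Tpow: "foldr (**) (replicate k (Tmat m)) (mat 1) = mat2 (of_nat m ^ k) 0 0 1"
  by (induction k) (simp_all add: mat1_eq gens_mat2 mat2_mult del: foldr_replicate)

lemma digits:
  assumes "m \<ge> 2"
  shows "r < m ^ d \<Longrightarrow> \<exists>ws. set ws \<subseteq> gens m \<and> length ws \<le> (m+1)*d \<and>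
     foldr (**) ws (mat 1) = mat2 1 (of_nat r) 0 1"
proof (induction d arbitrary: r)
  case 0
  then show ?case by (intro exI[of _ "[]"]) (simp add: mat1_eq)
next
  case (Suc d)
  have mpos: "m > 0" using assms by simp
  have "r < m ^ d * m" using Suc.prems unfolding power_Suc2 .
  then have "r div m < m ^ d" using div_less_iff_less_mult[OF mpos] by blast
  then obtain ws where ws: "set ws \<subseteq> gens m" "length ws \<le> (m+1)*d"
    "foldr (**) ws (mat 1) = mat2 1 (of_nat (r div m)) 0 1" using Suc.IH by blast
  define vs where "vs = replicate (r mod m) Amat @ [Tmat m] @ ws @ [Tinv m]"
  have s1: "set vs \<subseteq> gens m" using ws(1) by (auto simp: vs_def gens_def)
  have l1: "r mod m < m" using mpos by simp
  have l2: "length vs = r mod m + length ws + 2" by (simp add: vs_def)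
  have l3: "(m+1) * Suc d = (m+1)*d + (m+1)" by simp
  have s2: "length vs \<le> (m+1) * Suc d" using ws(2) l1 l2 l3 by linarith
  have f1: "foldr (**) vs (mat 1) = mat2 1 (of_nat (r mod m)) 0 1 ** (Tmat m ** (mat2 1 (of_nat (r div m)) 0 1 ** Tinv m))"
    unfolding vs_def foldr_append_mat by (simp add: Apow ws(3) del: foldr_replicate)
  have e: "of_nat m * of_nat (r div m) + of_nat (r mod m) = (of_nat r :: rat)"
  proof -
    have "m * (r div m) + r mod m = r" by simp
    then have "(of_nat (m * (r div m) + r mod m) :: rat) = of_nat r" by (rule arg_cong)
    then show ?thesis by (simp only: of_nat_add of_nat_mult)
  qed
  have f2: "mat2 1 (of_nat (r mod m)) 0 1 ** (Tmat m ** (mat2 1 (of_nat (r div m)) 0 1 ** Tinv m)) = mat2 1 (of_nat r) 0 1"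
    using mpos by (simp add: gens_mat2 mat2_mult e)
  show ?case using s1 s2 f1 f2 by metis
qed

lemma cong_to_congN:
  assumes "[m ^ a = m ^ b] (mod N)" "m > 0"
  shows "congN m N (of_nat m ^ a / of_nat m ^ b - 1) 0"
proof -
  have "[int m ^ a = int m ^ b] (mod int N)" using assms(1) cong_int_iff[of "m^a" "m^b" N]
    by simp
  then have "int N dvd int m ^ a - int m ^ b" by (simp add: cong_iff_dvd_diff)
  then obtain t where t: "int m ^ a - int m ^ b = int N * t" by blast
  have "(of_nat m ^ a - of_nat m ^ b :: rat) = of_int (int m ^ a - int m ^ b)" by simp
  also have "\<dots> = of_nat N * of_int t" using t by simp
  finally have e: "(of_nat m ^ a - of_nat m ^ b :: rat) = of_nat N * of_int t" .
  have mp: "(of_nat m :: rat) ^ b > 0" using assms by simp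
  have "of_nat m ^ a / of_nat m ^ b - 1 = (of_nat m ^ a - of_nat m ^ b :: rat) / of_nat m ^ b"
    using mp by (simp add: field_simps)
  also have "\<dots> = of_nat N * of_int t / of_nat m ^ b" using e by simp
  finally show ?thesis unfolding congN_def by (metis diff_zero)
qed

lemma congN_to_cong:
  assumes "congN m N (of_nat m ^ a / of_nat m ^ b - 1) 0" "m > 0" "coprime N m"
  shows "[m ^ a = m ^ b] (mod N)"
proof -
  obtain t l where t: "(of_nat m ^ a / of_nat m ^ b - 1 :: rat) = of_nat N * of_int t / of_nat m ^ l"
    using assms(1) by (auto simp: congN_def)
  have mp: "(of_nat m :: rat) ^ k > 0" for k using assms by simp
  have "(of_nat m ^ a - of_nat m ^ b :: rat) * of_nat m ^ l = of_nat N * of_int t * of_nat m ^ b"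
    using t mp[of b] mp[of l] by (simp add: field_simps)
  then have "of_int ((int m ^ a - int m ^ b) * int m ^ l) = (of_int (int N * t * int m ^ b) :: rat)"
    by simp
  then have "(int m ^ a - int m ^ b) * int m ^ l = int N * (t * int m ^ b)"
    by (simp only: of_int_eq_iff)
  then have "int N dvd (int m ^ a - int m ^ b) * int m ^ l" by (rule dvdI)
  moreover have "coprime (int N) (int m ^ l)" using assms(3) by simp
  ultimately have "int N dvd int m ^ a - int m ^ b" using coprime_dvd_mult_left_iff by blast
  then have "[int m ^ a = int m ^ b] (mod int N)" by (simp add: cong_iff_dvd_diff)
  then show ?thesis using cong_int_iff[of "m^a" "m^b" N] by simp
qed

lemma ord_facts:
  fixes m N :: nat
  assumes "m \<ge> 2" "N \<ge> 2" "coprime N m"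
  shows "ord N m > 0" "[m ^ ord N m = 1] (mod N)" "N \<le> m ^ ord N m"
proof -
  show d0: "ord N m > 0" using assms by simp
  show c: "[m ^ ord N m = 1] (mod N)" using ord_works by blast
  show "N \<le> m ^ ord N m"
  proof (rule ccontr)
    assume "\<not> N \<le> m ^ ord N m"
    then have "m ^ ord N m mod N = m ^ ord N m" by simp
    moreover have "1 mod N = 1" using assms by simp
    ultimately have "m ^ ord N m = 1" using c by (simp add: cong_def)
    moreover have "1 \<le> ord N m" using d0 by linarith
    then have "m ^ ord N m \<ge> m ^ 1" using assms by (intro power_increasing) auto
    ultimately show False using assms by simp
  qed
qed

lemma reach:
  assumes m2: "m \<ge> 2" and N: "N \<ge> 2" "coprime N m"
    and g1: "g1 \<in> Gm_carrier m" and g2: "g2 \<in> Gm_carrier m"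
  shows "\<exists>gs. set gs \<subseteq> gens m \<and> length gs \<le> (m+2) * ord N m \<and>
     GmN m N #>\<^bsub>Gm m\<^esub> (g1 ** foldr (**) gs (mat 1)) = GmN m N #>\<^bsub>Gm m\<^esub> g2"
proof -
  have mpos: "m > 0" using m2 by simp
  interpret G: group "Gm m" by (rule Gm_group[OF mpos])
  interpret NN: normal "GmN m N" "Gm m" by (rule GmN_normal[OF mpos])
  have mp: "(of_nat m :: rat) ^ k > 0" for k using mpos by simp
  define d where "d = ord N m"
  have d0: "d > 0" and md: "[m ^ d = 1] (mod N)" and Nd: "N \<le> m ^ d"
    using ord_facts[OF m2 N] by (auto simp: d_def)
  have mdx: "[(m ^ d) ^ x = 1] (mod N)" for x using cong_pow[OF md, of x] by simp
  have g1c: "g1 \<in> carrier (Gm m)" and g2c: "g2 \<in> carrier (Gm m)" using g1 g2 by (auto simp: carrier_Gm)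
  define z where "z = inv\<^bsub>Gm m\<^esub> g1 ** g2"
  have zc: "z \<in> Gm_carrier m" unfolding z_def using G.m_closed[OF G.inv_closed[OF g1c] g2c]
    by (simp add: carrier_Gm mult_Gm)
  obtain i j b where zr: "z = mat2 (of_nat m ^ i / of_nat m ^ j) b 0 1" "inZ m b"
    using carrier_rep[OF mpos zc] by blast
  obtain c l where bc: "b = of_int c / of_nat m ^ l" using zr(2) by (auto simp: inZ_def)
  define k where "k = (i + j * (d - 1)) mod d"
  have kd: "k < d" using d0 by (simp add: k_def)
  have kc: "[m ^ (k + j) = m ^ i] (mod N)"
  proof -
    define q where "q = i + j * (d - 1)"
    have "q = d * (q div d) + k" by (simp add: k_def q_def)
    then have "k + j + d * (q div d) = i + d * j" using d0 unfolding q_def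
      by (cases d) (auto simp: algebra_simps)
    then have "m ^ (k + j) * (m ^ d) ^ (q div d) = m ^ i * (m ^ d) ^ j"
      by (metis power_add power_mult)
    moreover have "[m ^ (k + j) * (m ^ d) ^ (q div d) = m ^ (k + j) * 1] (mod N)"
      by (rule cong_scalar_left[OF mdx])
    moreover have "[m ^ i * (m ^ d) ^ j = m ^ i * 1] (mod N)"
      by (rule cong_scalar_left[OF mdx])
    ultimately show ?thesis by (metis cong_sym cong_trans mult_1_right)
  qed
  define r' where "r' = (c * int m ^ ((d - 1) * l)) mod int N"
  have r'0: "r' \<ge> 0" "r' < int N" using N by (auto simp: r'_def)
  have rc: "[r' * int m ^ l = c] (mod int N)"
  proof -
    have "[r' * int m ^ l = c * int m ^ ((d - 1) * l) * int m ^ l] (mod int N)"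
      unfolding r'_def by (simp add: cong_def mod_mult_left_eq)
    moreover have "c * int m ^ ((d - 1) * l) * int m ^ l = c * (int m ^ d) ^ l"
      using d0 by (simp add: power_add[symmetric] power_mult[symmetric] mult.assoc algebra_simps)
    moreover have "[c * (int m ^ d) ^ l = c * 1] (mod int N)"
    proof -
      have "[(int m ^ d) ^ l = 1] (mod int N)" using mdx[of l] cong_int_iff[of "(m^d)^l" 1 N] by simp
      then show ?thesis by (rule cong_scalar_left)
    qed
    ultimately show ?thesis by (metis cong_trans mult_1_right)
  qed
  have congr: "congN m N (of_int r' - b) 0"
  proof -
    obtain t where t: "r' * int m ^ l - c = int N * t"
      using rc by (metis cong_iff_dvd_diff dvd_def)
    have "(of_int r' - b :: rat) = of_int (r' * int m ^ l - c) / of_nat m ^ l"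
      using mp[of l] unfolding bc by (simp add: field_simps)
    also have "\<dots> = of_nat N * of_int t / of_nat m ^ l" unfolding t by simp
    finally show ?thesis unfolding congN_def by (metis diff_zero)
  qed
  define r where "r = nat r'"
  have rr: "(of_nat r :: rat) = of_int r'" using r'0 by (simp add: r_def)
  have "r < m ^ d" using r'0 Nd unfolding r_def by linarith
  then obtain us where us: "set us \<subseteq> gens m" "length us \<le> (m+1)*d"
    "foldr (**) us (mat 1) = mat2 1 (of_nat r) 0 1"
    using digits[OF m2] by blast
  define gs where "gs = us @ replicate k (Tmat m)"
  have gsg: "set gs \<subseteq> gens m" using us(1) by (auto simp: gs_def gens_def)
  have gsl: "length gs \<le> (m+2) * d"
  proof -
    have "length gs = length us + k" by (simp add: gs_def)
    moreover have "(m+2) * d = (m+1)*d + d" by simp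
    ultimately show ?thesis using us(2) kd by linarith
  qed
  define w where "w = foldr (**) gs (mat 1)"
  have w: "w = mat2 (of_nat m ^ k) (of_int r') 0 1"
    unfolding w_def gs_def foldr_append_mat us(3) Tpow by (simp add: mat2_mult rr)
  have wc: "w \<in> carrier (Gm m)" unfolding w_def using gsg word_carrier by (auto simp: carrier_Gm)
  let ?u = "(of_nat m ^ i / of_nat m ^ j :: rat)"
  have iz: "inv\<^bsub>Gm m\<^esub> z = mat2 (1/?u) (-b/?u) 0 1" using inv_mat2[OF mpos zc zr(1)] by blast
  have zc': "z \<in> carrier (Gm m)" using zc by (simp add: carrier_Gm)
  define h0 where "h0 = inv\<^bsub>Gm m\<^esub> z ** w"
  have h0c: "h0 \<in> Gm_carrier m" unfolding h0_def using G.m_closed[OF G.inv_closed[OF zc'] wc]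
    by (simp add: carrier_Gm mult_Gm)
  have h0r: "h0 = mat2 (of_nat m ^ (k + j) / of_nat m ^ i) ((of_nat m ^ j / of_nat m ^ i) * (of_int r' - b)) 0 1"
    unfolding h0_def iz w mat2_mult using mp[of i] mp[of j]
    by (simp add: mat2_eq field_simps power_add)
  have h0H: "h0 \<in> GmN m N"
    using h0c unfolding h0r GmN_mat2
    using cong_to_congN[OF kc mpos] congN_0_mult[OF inZ_pow[OF mpos] congr] by simp
  have "g1 ** w = g2 \<otimes>\<^bsub>Gm m\<^esub> h0"
  proof -
    have "g1 ** w = g1 \<otimes>\<^bsub>Gm m\<^esub> (z \<otimes>\<^bsub>Gm m\<^esub> (inv\<^bsub>Gm m\<^esub> z \<otimes>\<^bsub>Gm m\<^esub> w))"
      using zc' wc by (simp add: G.m_assoc[symmetric] mult_Gm[symmetric])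
    also have "\<dots> = (g1 \<otimes>\<^bsub>Gm m\<^esub> z) \<otimes>\<^bsub>Gm m\<^esub> h0"
      by (simp add: h0_def mult_Gm matrix_mul_assoc)
    also have "g1 \<otimes>\<^bsub>Gm m\<^esub> z = g2"
    proof -
      have "g1 \<otimes>\<^bsub>Gm m\<^esub> z = g1 \<otimes>\<^bsub>Gm m\<^esub> (inv\<^bsub>Gm m\<^esub> g1 \<otimes>\<^bsub>Gm m\<^esub> g2)"
        by (simp add: z_def mult_Gm)
      also have "\<dots> = g2" using g1c g2c by (simp add: G.m_assoc[symmetric])
      finally show ?thesis .
    qed
    finally show ?thesis .
  qed
  moreover have "g2 \<otimes>\<^bsub>Gm m\<^esub> h0 \<in> GmN m N #>\<^bsub>Gm m\<^esub> g2"
  proof -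
    have h0c': "h0 \<in> carrier (Gm m)" using h0c by (simp add: carrier_Gm)
    have "g2 \<otimes>\<^bsub>Gm m\<^esub> h0 \<otimes>\<^bsub>Gm m\<^esub> inv\<^bsub>Gm m\<^esub> g2 \<in> GmN m N"
      by (rule NN.inv_op_closed2[OF g2c h0H])
    moreover have "g2 \<otimes>\<^bsub>Gm m\<^esub> h0 = (g2 \<otimes>\<^bsub>Gm m\<^esub> h0 \<otimes>\<^bsub>Gm m\<^esub> inv\<^bsub>Gm m\<^esub> g2) \<otimes>\<^bsub>Gm m\<^esub> g2"
      using g2c h0c' by (simp add: G.m_assoc)
    ultimately show ?thesis using G.rcosI[of _ "GmN m N" g2] g2c GmN_sub[of m N]
      by (metis carrier_Gm)
  qed
  ultimately have "GmN m N #>\<^bsub>Gm m\<^esub> g2 = GmN m N #>\<^bsub>Gm m\<^esub> (g1 ** w)"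
    using G.repr_independence[OF _ g2c NN.subgroup_axioms] by simp
  then show ?thesis using gsg gsl unfolding w_def d_def by metis
qed

lemma coset_elem:
  assumes mpos: "m > 0" and wc: "w \<in> Gm_carrier m" and yc: "y \<in> Gm_carrier m"
    and eq: "GmN m N #>\<^bsub>Gm m\<^esub> w = GmN m N #>\<^bsub>Gm m\<^esub> y"
  shows "\<exists>h \<in> GmN m N. w = h ** y"
proof -
  interpret G: group "Gm m" by (rule Gm_group[OF mpos])
  have "w \<in> GmN m N #>\<^bsub>Gm m\<^esub> w"
    using G.rcos_self[OF _ GmN_subgroup[OF mpos]] wc by (simp add: carrier_Gm)
  then have "w \<in> GmN m N #>\<^bsub>Gm m\<^esub> y" using eq by simp
  then show ?thesis unfolding r_coset_def by (auto simp: mult_Gm)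
qed

lemma lower_T:
  assumes m2: "m \<ge> 2" and N: "N \<ge> 2" "coprime N m" and d2: "ord N m \<ge> 2"
    and gs: "set gs \<subseteq> gens m"
    and eq: "GmN m N #>\<^bsub>Gm m\<^esub> (mat 1 ** foldr (**) gs (mat 1)) =
             GmN m N #>\<^bsub>Gm m\<^esub> foldr (**) (replicate (ord N m div 2) (Tmat m)) (mat 1)"
  shows "ord N m div 2 \<le> length gs"
proof (rule ccontr)
  assume lt: "\<not> ord N m div 2 \<le> length gs"
  define d where "d = ord N m"
  define s where "s = d div 2"
  have mpos: "m > 0" using m2 by simp
  have mp: "(of_nat m :: rat) ^ k > 0" for k using mpos by simp
  obtain i j b where w: "foldr (**) gs (mat 1) = mat2 (of_nat m ^ i / of_nat m ^ j) b 0 1" "inZ m b"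
    "i + j \<le> length gs" using word_rep[OF mpos gs] by blast
  have Tc: "foldr (**) (replicate s (Tmat m)) (mat 1) \<in> Gm_carrier m"
    by (rule word_carrier) (auto simp: gens_def)
  obtain h where h: "h \<in> GmN m N" "foldr (**) gs (mat 1) = h ** foldr (**) (replicate s (Tmat m)) (mat 1)"
    using coset_elem[OF mpos word_carrier[OF gs] Tc] eq by (auto simp: d_def s_def)
  obtain i' j' e where hr: "h = mat2 (of_nat m ^ i' / of_nat m ^ j') e 0 1"
    "congN m N (of_nat m ^ i' / of_nat m ^ j' - 1) 0"
    using GmN_elem[OF mpos h(1)] by blast
  have "mat2 (of_nat m ^ i / of_nat m ^ j) b 0 1 = mat2 (of_nat m ^ i' / of_nat m ^ j' * of_nat m ^ s) e 0 1"
    using h(2) unfolding w(1) hr(1) Tpow by (simp add: mat2_mult)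
  then have "(of_nat m ^ i / of_nat m ^ j :: rat) = of_nat m ^ i' / of_nat m ^ j' * of_nat m ^ s"
    by (simp add: mat2_eq)
  then have "(of_nat m ^ i' / of_nat m ^ j' :: rat) = of_nat m ^ i / of_nat m ^ (j + s)"
    using mp[of s] mp[of j] by (simp add: field_simps power_add)
  then have cg: "[m ^ i = m ^ (j + s)] (mod N)" using congN_to_cong[OF _ mpos N(2)] hr(2) by simp
  have ijs: "i < j + s" using lt w(3) by (simp add: s_def d_def)
  define e where "e = j + s - i"
  have e: "j + s = i + e" "e > 0" using ijs by (auto simp: e_def)
  have "[m ^ i * m ^ e = m ^ i * 1] (mod N)" using cong_sym[OF cg] unfolding e(1) power_add by simp
  moreover have "coprime (m ^ i) N" using N(2) by (simp add: coprime_commute)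
  ultimately have "[m ^ e = 1] (mod N)" using cong_mult_lcancel_nat by blast
  then have "d dvd e" unfolding d_def using ord_divides by blast
  then have "d \<le> e" using e(2) by (simp add: dvd_imp_le)
  moreover have "e < d" using lt w(3) unfolding e_def s_def d_def by linarith
  ultimately show False by simp
qed

lemma lower_A:
  assumes m2: "m \<ge> 2" and N: "N \<ge> 2" "coprime N m"
  shows "GmN m N #>\<^bsub>Gm m\<^esub> (mat 1 ** foldr (**) [] (mat 1)) \<noteq> GmN m N #>\<^bsub>Gm m\<^esub> Amat"
proof
  assume eq: "GmN m N #>\<^bsub>Gm m\<^esub> (mat 1 ** foldr (**) [] (mat 1)) = GmN m N #>\<^bsub>Gm m\<^esub> Amat"
  have mpos: "m > 0" using m2 by simp
  have Ac: "Amat \<in> Gm_carrier m" by (rule gens_carrier) (simp add: gens_def)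
  have oc: "mat 1 \<in> Gm_carrier m" using word_carrier[of "[]" m] by simp
  obtain h where h: "h \<in> GmN m N" "mat 1 = h ** Amat"
    using coset_elem[OF mpos oc Ac] eq by auto
  obtain i' j' e where hr: "h = mat2 (of_nat m ^ i' / of_nat m ^ j') e 0 1" "congN m N e 0"
    using GmN_elem[OF mpos h(1)] by blast
  have "mat2 1 0 0 1 = mat2 (of_nat m ^ i' / of_nat m ^ j') (of_nat m ^ i' / of_nat m ^ j' + e) 0 1"
    using h(2) unfolding hr(1) mat1_eq gens_mat2 by (simp add: mat2_mult)
  then have "1 = (of_nat m ^ i' / of_nat m ^ j' :: rat) \<and> 0 = of_nat m ^ i' / of_nat m ^ j' + e"
    unfolding mat2_eq by blast
  then have "e = -1" by linarith
  then obtain t l where t: "(-1 :: rat) = of_nat N * of_int t / of_nat m ^ l"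
    using hr(2) by (auto simp: congN_def)
  have "(of_nat m :: rat) ^ l > 0" using mpos by simp
  then have "(- (of_nat m ^ l) :: rat) = of_nat N * of_int t" using t by (simp add: field_simps)
  then have "of_int (- (int m ^ l)) = (of_int (int N * t) :: rat)" by simp
  then have "- (int m ^ l) = int N * t" by (simp only: of_int_eq_iff)
  then have "int m ^ l = int N * (- t)" by simp
  then have dv: "int N dvd int m ^ l" by (rule dvdI)
  have cp: "coprime (int N) (int m ^ l)" using N(2) by simp
  have "is_unit (int N)" using coprime_absorb_left[OF dv] cp by simp
  then show False using N by simp
qed

lemma least_ge:
  assumes "\<exists>n::nat. P n" "\<And>n. P n \<Longrightarrow> L \<le> n"
  shows "L \<le> (LEAST n. P n)"
  using LeastI_ex[OF assms(1)] assms(2) by blast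

theorem lemma3p3:
  fixes m :: nat
  assumes "m \<ge> 2"
  shows "\<exists>C::real. C > 0 \<and> (\<forall>N::nat. N \<ge> 2 \<and> coprime N m \<longrightarrow>
           real (ord N m) / 3 \<le> real (cay_diam (Qgrp m N) (Qgens m N)) \<and>
           real (cay_diam (Qgrp m N) (Qgens m N)) \<le> C * real (ord N m))"
proof -
  have mpos: "m > 0" using assms by simp
  show ?thesis
  proof (intro exI[of _ "real (m+2)"] conjI allI impI)
    show "real (m+2) > 0" by simp
  next
    fix N :: nat assume NN: "N \<ge> 2 \<and> coprime N m"
    then have N2: "N \<ge> 2" and cop: "coprime N m" by auto
    define d where "d = ord N m"
    have d0: "d > 0" using ord_facts[OF assms N2 cop] by (simp add: d_def)
    define B where "B = (m+2) * d"
    define H where "H = GmN m N"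
    define X where "X = {cay_dist (Qgrp m N) (Qgens m N) x y | x y. x \<in> carrier (Qgrp m N) \<and> y \<in> carrier (Qgrp m N)}"
    have diam: "cay_diam (Qgrp m N) (Qgens m N) = Sup X" by (simp add: cay_diam_def X_def)
    have distle: "cay_dist (Qgrp m N) (Qgens m N) x y \<le> B"
      if x: "x \<in> carrier (Qgrp m N)" and y: "y \<in> carrier (Qgrp m N)" for x y
    proof -
      obtain g1 where g1: "g1 \<in> Gm_carrier m" "x = H #>\<^bsub>Gm m\<^esub> g1" using x by (auto simp: carrier_Q H_def)
      obtain g2 where g2: "g2 \<in> Gm_carrier m" "y = H #>\<^bsub>Gm m\<^esub> g2" using y by (auto simp: carrier_Q H_def)
      obtain gs where gs: "set gs \<subseteq> gens m" "length gs \<le> B"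
        "H #>\<^bsub>Gm m\<^esub> (g1 ** foldr (**) gs (mat 1)) = H #>\<^bsub>Gm m\<^esub> g2"
        using reach[OF assms N2 cop g1(1) g2(1)] by (auto simp: B_def d_def H_def)
      have "cay_dist (Qgrp m N) (Qgens m N) x y \<le> length gs"
        unfolding g1(2) H_def cay_dist_eq[OF mpos g1(1)]
        by (rule Least_le) (use gs g2(2) in \<open>auto simp: H_def\<close>)
      then show ?thesis using gs(2) by simp
    qed
    have oc: "mat 1 \<in> Gm_carrier m" using word_carrier[of "[]" m] by simp
    have x0: "H #>\<^bsub>Gm m\<^esub> mat 1 \<in> carrier (Qgrp m N)" using oc by (auto simp: carrier_Q H_def)
    have Xne: "X \<noteq> {}" using x0 unfolding X_def by blast
    have bdd: "bdd_above X" unfolding X_def bdd_above_def using distle by blast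
    have suple: "Sup X \<le> B" using distle by (intro cSup_least[OF Xne]) (auto simp: X_def)
    have lower: "\<exists>L. d \<le> 3 * L \<and> L \<le> Sup X"
    proof (cases "d \<ge> 2")
      case True
      define T where "T = foldr (**) (replicate (d div 2) (Tmat m)) (mat 1)"
      have Tc: "T \<in> Gm_carrier m" unfolding T_def by (rule word_carrier) (auto simp: gens_def)
      have y0: "H #>\<^bsub>Gm m\<^esub> T \<in> carrier (Qgrp m N)" using Tc by (auto simp: carrier_Q H_def)
      have "d div 2 \<le> cay_dist (Qgrp m N) (Qgens m N) (H #>\<^bsub>Gm m\<^esub> mat 1) (H #>\<^bsub>Gm m\<^esub> T)"
        unfolding H_def cay_dist_eq[OF mpos oc]
      proof (rule least_ge)
        show "\<exists>n gs. length gs = n \<and> set gs \<subseteq> gens m \<and> GmN m N #>\<^bsub>Gm m\<^esub> (mat 1 ** foldr (**) gs (mat 1)) = GmN m N #>\<^bsub>Gm m\<^esub> T"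
          using reach[OF assms N2 cop oc Tc] by blast
      next
        fix n assume "\<exists>gs. length gs = n \<and> set gs \<subseteq> gens m \<and> GmN m N #>\<^bsub>Gm m\<^esub> (mat 1 ** foldr (**) gs (mat 1)) = GmN m N #>\<^bsub>Gm m\<^esub> T"
        then obtain gs where gs: "length gs = n" "set gs \<subseteq> gens m" "GmN m N #>\<^bsub>Gm m\<^esub> (mat 1 ** foldr (**) gs (mat 1)) = GmN m N #>\<^bsub>Gm m\<^esub> T"
          by blast
        show "d div 2 \<le> n" using lower_T[OF assms N2 cop _ gs(2)] gs(1,3) True by (simp add: d_def T_def)
      qed
      moreover have "cay_dist (Qgrp m N) (Qgens m N) (H #>\<^bsub>Gm m\<^esub> mat 1) (H #>\<^bsub>Gm m\<^esub> T) \<le> Sup X"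
        using x0 y0 by (intro cSup_upper[OF _ bdd]) (auto simp: X_def)
      moreover have "d \<le> 3 * (d div 2)" using True by linarith
      ultimately show ?thesis by (intro exI[of _ "d div 2"]) auto
    next
      case False
      then have d1: "d = 1" using d0 by simp
      have Ac: "Amat \<in> Gm_carrier m" by (rule gens_carrier) (simp add: gens_def)
      have y0: "H #>\<^bsub>Gm m\<^esub> Amat \<in> carrier (Qgrp m N)" using Ac by (auto simp: carrier_Q H_def)
      have "1 \<le> cay_dist (Qgrp m N) (Qgens m N) (H #>\<^bsub>Gm m\<^esub> mat 1) (H #>\<^bsub>Gm m\<^esub> Amat)"
        unfolding H_def cay_dist_eq[OF mpos oc]
      proof (rule least_ge)
        show "\<exists>n gs. length gs = n \<and> set gs \<subseteq> gens m \<and> GmN m N #>\<^bsub>Gm m\<^esub> (mat 1 ** foldr (**) gs (mat 1)) = GmN m N #>\<^bsub>Gm m\<^esub> Amat"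
          using reach[OF assms N2 cop oc Ac] by blast
      next
        fix n assume "\<exists>gs. length gs = n \<and> set gs \<subseteq> gens m \<and> GmN m N #>\<^bsub>Gm m\<^esub> (mat 1 ** foldr (**) gs (mat 1)) = GmN m N #>\<^bsub>Gm m\<^esub> Amat"
        then obtain gs where gs: "length gs = n" "GmN m N #>\<^bsub>Gm m\<^esub> (mat 1 ** foldr (**) gs (mat 1)) = GmN m N #>\<^bsub>Gm m\<^esub> Amat"
          by blast
        show "1 \<le> n"
        proof (rule ccontr)
          assume "\<not> 1 \<le> n"
          then have "gs = []" using gs(1) by (cases gs) auto
          then show False using lower_A[OF assms N2 cop] gs(2) by simp
        qed
      qed
      moreover have "cay_dist (Qgrp m N) (Qgens m N) (H #>\<^bsub>Gm m\<^esub> mat 1) (H #>\<^bsub>Gm m\<^esub> Amat) \<le> Sup X"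
        using x0 y0 by (intro cSup_upper[OF _ bdd]) (auto simp: X_def)
      ultimately show ?thesis using d1 by (intro exI[of _ 1]) auto
    qed
    then obtain L where L: "d \<le> 3 * L" "L \<le> Sup X" by blast
    have "real d / 3 \<le> real L" using L(1) by simp
    also have "\<dots> \<le> real (Sup X)" using L(2) by simp
    finally have A: "real (ord N m) / 3 \<le> real (cay_diam (Qgrp m N) (Qgens m N))"
      by (simp add: diam d_def)
    have "real (Sup X) \<le> real B" using suple by simp
    then have Bd: "real (cay_diam (Qgrp m N) (Qgens m N)) \<le> real (m+2) * real (ord N m)"
      by (simp add: diam B_def d_def distrib_right)
    show "real (ord N m) / 3 \<le> real (cay_diam (Qgrp m N) (Qgens m N))" by (rule A)
    show "real (cay_diam (Qgrp m N) (Qgens m N)) \<le> real (m+2) * real (ord N m)" by (rule Bd)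
  qed
qed

end
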